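(* Let $k\ge2$, $r\ge0$ and $n=2\cdot 3^k-2+4r$. Let $M$ be the closed surface carrying the polyhedral map $D_{\{2k+1,2k+1\}}(n)$. Then $M$ is orientable if $r$ is even and non-orientable if $r$ is odd.
   Context: Vertex set $\mathbb{Z}_n$; integers are read modulo $n$. Define $w_0=0$, $w_1=3^k-1+2r$. Then successively subtract $3^{k-1}+r$ twice, then $3^{k-2}$ twice, $3^{k-3}$ twice, ..., and finally $3$ twice. This gives vertices $w_2,\dots,w_{2k-1}$, and one checks $w_{2k-1}=2$. Let $P$ be the $(2k+1)$-gon with cyclically ordered boundary vertices $(0,w_1,w_2,\dots,w_{2k-2},2,1)$. The map $D_{\{2k+1,2k+1\}}(n)$ is the 2-dimensional cell complex whose 2-cells are the $n$ translates $P+i$, $i\in\mathbb{Z}_n$. It is a known standing fact (Datta) that this is a $\{2k+1,2k+1\}$-equivelar polyhedral map on a closed surface $M$: every 2-cell is a $(2k+1)$-gon, every vertex has degree $2k+1$, and any two 2-cells meet in the empty set, a common vertex, or a common edge. *)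

theory Defs
  imports Main
begin

(* Combinatorial orientability of a 2-dimensional cell complex given by a list of
   faces, each face a list of vertices in cyclic boundary order. *)

definition face_darts :: "'a list \<Rightarrow> ('a \<times> 'a) set" where
  "face_darts F = {(F ! j, F ! ((j + 1) mod length F)) | j. j < length F}"

definition oriented_darts :: "bool \<Rightarrow> 'a list \<Rightarrow> ('a \<times> 'a) set" where
  "oriented_darts s F = (if s then face_darts F else (\<lambda>(a, b). (b, a)) ` face_darts F)"

(* orientable: the faces can be oriented so that every edge is traversed in opposite
   directions by the (two) faces containing it, i.e. no directed edge occurs in two
   distinct oriented faces *)
definition orientable_map :: "'a list list \<Rightarrow> bool" where
  "orientable_map Fs \<longleftrightarrow> (\<exists>\<sigma> :: nat \<Rightarrow> bool.
     \<forall>i j. i < length Fs \<longrightarrow> j < length Fs \<longrightarrow> i \<noteq> j \<longrightarrow>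
       oriented_darts (\<sigma> i) (Fs ! i) \<inter> oriented_darts (\<sigma> j) (Fs ! j) = {})"

(* the step subtracted to go from w_(t-1) to w_t, t = 2 .. 2k-1:
   3^(k-1)+r twice, then 3^(k-2) twice, ..., 3 twice *)
definition D_step :: "nat \<Rightarrow> nat \<Rightarrow> nat \<Rightarrow> int" where
  "D_step k r t = 3 ^ (k - t div 2) + (if t \<le> 3 then int r else 0)"

definition D_w :: "nat \<Rightarrow> nat \<Rightarrow> nat \<Rightarrow> int" where
  "D_w k r j = (if j = 0 then 0
                else 3 ^ k - 1 + 2 * int r - (\<Sum>t = 2..j. D_step k r t))"

definition D_polygon :: "nat \<Rightarrow> nat \<Rightarrow> int list" where
  "D_polygon k r = map (D_w k r) [0..<2 * k - 1] @ [2, 1]"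

(* the faces P + i, i in Z_n, vertices read modulo n (represented in {0..n-1}) *)
definition D_map :: "nat \<Rightarrow> nat \<Rightarrow> nat \<Rightarrow> int list list" where
  "D_map k r n = map (\<lambda>i. map (\<lambda>v. (v + int i) mod int n) (D_polygon k r)) [0..<n]"

end

theory Submission
  imports Defs
begin


lemma Dp_len: "k \<ge> 1 \<Longrightarrow> length (D_polygon k r) = 2*k+1"
  by (simp add: D_polygon_def)

lemma Dw_succ: "a \<ge> 1 \<Longrightarrow> D_w k r (a+1) = D_w k r a - D_step k r (a+1)"
proof -
  assume a: "a \<ge> 1"
  have "(\<Sum>t = 2..Suc a. D_step k r t) = (\<Sum>t = 2..a. D_step k r t) + D_step k r (Suc a)"
    using a by (simp add: sum.cl_ivl_Suc)
  then show ?thesis using a by (simp add: D_w_def)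
qed

lemma Dw_odd: "1 \<le> m \<Longrightarrow> m < k \<Longrightarrow> D_w k r (2*m+1) = 3^(k-m) - 1"
proof (induction m)
  case 0 then show ?case by simp
next
  case (Suc m)
  show ?case
  proof (cases "m = 0")
    case True
    have k: "(3::int)^k = 3 * 3^(k-1)" using Suc.prems
      by (metis Suc_diff_1 not_less_zero zero_less_iff_neq_zero power_Suc gr0I)
    have "D_w k r 3 = D_w k r 2 - D_step k r 3" using Dw_succ[of 2 k r] by simp
    moreover have "D_w k r 2 = D_w k r 1 - D_step k r 2" using Dw_succ[of 1 k r] by (simp add: numeral_2_eq_2)
    moreover have "D_w k r 1 = 3^k - 1 + 2 * int r" by (simp add: D_w_def)
    ultimately show ?thesis using True k by (simp add: D_step_def)
  next
    case False
    have IH: "D_w k r (2*m+1) = 3^(k-m) - 1" using Suc False by simp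
    have e: "k - m = Suc (k - Suc m)" using Suc.prems by simp
    have s1: "D_w k r (2*m+2) = D_w k r (2*m+1) - D_step k r (2*m+2)"
      using Dw_succ[of "2*m+1" k r] by simp
    have s2: "D_w k r (2*m+3) = D_w k r (2*m+2) - D_step k r (2*m+3)"
      using Dw_succ[of "2*m+2" k r] by (simp add: numeral_eq_Suc)
    have d2: "D_step k r (2*m+2) = 3^(k - Suc m)" using False by (simp add: D_step_def)
    have d3: "D_step k r (2*m+3) = 3^(k - Suc m)" using False by (simp add: D_step_def)
    have "(3::int)^(k-m) = 3 * 3^(k - Suc m)" by (simp add: e)
    then show ?thesis using IH s1 s2 d2 d3 by (simp add: numeral_eq_Suc)
  qed
qed

lemma Dw_last: "k \<ge> 2 \<Longrightarrow> D_w k r (2*k-1) = 2"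
  using Dw_odd[of "k-1" k r] by (simp add: numeral_eq_Suc Suc_diff_Suc)



lemma Dp_nth: "k \<ge> 2 \<Longrightarrow> a \<le> 2*k-1 \<Longrightarrow> D_polygon k r ! a = D_w k r a"
proof -
  assume k: "k \<ge> 2" and a: "a \<le> 2*k-1"
  show ?thesis
  proof (cases "a < 2*k-1")
    case True then show ?thesis by (simp add: D_polygon_def nth_append)
  next
    case False
    then have "a = 2*k-1" using a by simp
    then show ?thesis using k Dw_last[of k r] by (simp add: D_polygon_def nth_append)
  qed
qed

lemma Dp_nth_last: "k \<ge> 2 \<Longrightarrow> D_polygon k r ! (2*k) = 1"
proof -
  assume k: "k \<ge> 2"
  have "\<not> 2*k < 2*k-1" "2*k - (2*k-1) = 1" using k by auto
  then show ?thesis by (simp add: D_polygon_def nth_append)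
qed

lemma Dp_d0: "k \<ge> 2 \<Longrightarrow> D_polygon k r ! 1 - D_polygon k r ! 0 = 3^k - 1 + 2 * int r"
  using Dp_nth[of k 1 r] Dp_nth[of k 0 r] by (simp add: D_w_def)

lemma Dp_d: "k \<ge> 2 \<Longrightarrow> 1 \<le> a \<Longrightarrow> a \<le> 2*k \<Longrightarrow>
  D_polygon k r ! ((a+1) mod (2*k+1)) = D_polygon k r ! a - D_step k r (a+1)"
proof -
  assume k: "k \<ge> 2" and a1: "1 \<le> a" and a2: "a \<le> 2*k"
  consider "a \<le> 2*k-2" | "a = 2*k-1" | "a = 2*k" using a2 by linarith
  then show ?thesis
  proof cases
    case 1
    then show ?thesis using k a1 Dp_nth[of k a r] Dp_nth[of k "a+1" r] Dw_succ[of a k r] by simp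
  next
    case 2
    have "D_step k r (a+1) = 1" using 2 k by (simp add: D_step_def)
    moreover have "D_polygon k r ! a = 2" using 2 k Dp_nth[of k a r] Dw_last[of k r] by simp
    moreover have "(a+1) mod (2*k+1) = 2*k" using 2 k by simp
    ultimately show ?thesis using k Dp_nth_last[of k r] by simp
  next
    case 3
    have "D_step k r (a+1) = 1" using 3 k by (simp add: D_step_def)
    moreover have "(a+1) mod (2*k+1) = 0" using 3 by simp
    ultimately show ?thesis using 3 k Dp_nth_last[of k r] Dp_nth[of k 0 r] by (simp add: D_w_def)
  qed
qed

lemma Dstep_pos: "0 < D_step k r t"
  by (simp add: D_step_def add_pos_nonneg)

lemma Dstep_lt: "k \<ge> 2 \<Longrightarrow> 2 \<le> t \<Longrightarrow> D_step k r t < 3^k - 1 + 2 * int r"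
proof -
  assume k: "k \<ge> 2" and t: "2 \<le> t"
  have p: "(3::int)^(k - t div 2) \<le> 3^(k-1)" using t by (intro power_increasing) auto
  have q: "(3::int)^k = 3 * 3^(k-1)" using k by (cases k) auto
  have o: "(1::int) \<le> 3^(k-1)" by simp
  have "D_step k r t \<le> 3^(k - t div 2) + int r" by (simp add: D_step_def)
  then show ?thesis using p q o by linarith
qed

lemma Dstep_odd: "even r \<Longrightarrow> odd (D_step k r t)"
  by (simp add: D_step_def)

lemma Dstep_inj: "k \<ge> 2 \<Longrightarrow> 2 \<le> s \<Longrightarrow> s \<le> 2*k+1 \<Longrightarrow> 2 \<le> t \<Longrightarrow> t \<le> 2*k+1 \<Longrightarrow>
   D_step k r s = D_step k r t \<Longrightarrow> s div 2 = t div 2"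
proof -
  assume k: "k \<ge> 2" and s: "2 \<le> s" "s \<le> 2*k+1" and t: "2 \<le> t" "t \<le> 2*k+1"
    and e: "D_step k r s = D_step k r t"
  have big: False if "2 \<le> s" "s \<le> 3" "\<not> t \<le> 3" "D_step k r s = D_step k r t" for s t :: nat
  proof -
    have p: "(3::int)^(k - t div 2) \<le> 3^(k-2)" using that by (intro power_increasing) auto
    have q: "(3::int)^(k-1) = 3 * 3^(k-2)" using k
      by (cases k; cases "k-1") (auto simp: numeral_eq_Suc)
    have o: "(1::int) \<le> 3^(k-2)" by simp
    have "s div 2 = 1" using that(1,2) by auto
    then have "D_step k r s = 3^(k-1) + int r" using that by (simp add: D_step_def)
    moreover have "D_step k r t = 3^(k - t div 2)" using that by (simp add: D_step_def)
    ultimately show False using p q o that(4) by linarith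
  qed
  show ?thesis
  proof (cases "s \<le> 3")
    case True
    show ?thesis
    proof (cases "t \<le> 3")
      case True2: True
      have "s = 2 \<or> s = 3" "t = 2 \<or> t = 3" using True True2 s t by auto
      then show ?thesis by auto
    next
      case False
      then show ?thesis using big[of s t] True e s by auto
    qed
  next
    case False
    then have "\<not> t \<le> 3" using big[of t s] e t by auto
    then have "(3::int)^(k - s div 2) = 3^(k - t div 2)" using False e by (simp add: D_step_def)
    then have "k - s div 2 = k - t div 2" by (simp add: power_inject_exp)
    then show ?thesis using s t by auto
  qed
qed



lemma dvd_small: "(N::int) dvd x \<Longrightarrow> \<bar>x\<bar> < N \<Longrightarrow> x = 0"
proof (rule ccontr)
  assume "N dvd x" "\<bar>x\<bar> < N" "x \<noteq> 0"
  then have "\<bar>N\<bar> \<le> \<bar>x\<bar>" using dvd_imp_le_int by blast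
  then show False using \<open>\<bar>x\<bar> < N\<close> by simp
qed

lemma core_same:
  fixes V d :: "nat \<Rightarrow> int" and N H i j :: int
  assumes N: "N = 2*H" "H > 0"
  and d0: "d 0 = H"
  and dneg: "\<And>a. 0<a \<Longrightarrow> a<L \<Longrightarrow> -H < d a \<and> d a < 0"
  and pair: "\<And>a b. 0<a \<Longrightarrow> 0<b \<Longrightarrow> a<L \<Longrightarrow> b<L \<Longrightarrow> a\<noteq>b \<Longrightarrow> d a = d b \<Longrightarrow> odd (V a - V b)"
  and ab: "a<L" "b<L"
  and e1: "(V a + i) mod N = (V b + j) mod N"
  and e2: "(V a + d a + i) mod N = (V b + d b + j) mod N"
  and par: "even (i - j)" and ij: "0 \<le> i" "i < N" "0 \<le> j" "j < N"
  shows "i = j"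
proof -
  have x1: "N dvd (V a + i - (V b + j))" using e1 by (simp add: mod_eq_dvd_iff)
  have x2: "N dvd (V a + d a + i - (V b + d b + j))" using e2 by (simp add: mod_eq_dvd_iff)
  have "N dvd ((V a + d a + i - (V b + d b + j)) - (V a + i - (V b + j)))"
    using x1 x2 dvd_diff by blast
  then have "N dvd (d a - d b)" by (simp add: algebra_simps)
  moreover have "\<bar>d a - d b\<bar> < N"
    using dneg[of a] dneg[of b] ab d0 N by (cases "a = 0"; cases "b = 0") auto
  ultimately have dd: "d a = d b" using dvd_small[of N "d a - d b"] by simp
  show ?thesis
  proof (cases "a = b")
    case True
    then have "N dvd (i - j)" using x1 by simp
    then show ?thesis using dvd_small[of N "i - j"] ij by auto
  next
    case False
    have "a \<noteq> 0 \<and> b \<noteq> 0" using dd False d0 dneg[of a] dneg[of b] ab N by (cases "a = 0"; cases "b = 0") auto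
    then have "a \<noteq> 0" "b \<noteq> 0" by auto
    then have o: "odd (V a - V b)" using pair[of a b] ab False dd by auto
    have "2 dvd N" using N by simp
    then have "2 dvd (V a + i - (V b + j))" using x1 dvd_trans by blast
    then have "even (V a - V b + (i - j))" by (simp add: algebra_simps)
    then show ?thesis using o par by simp
  qed
qed

lemma core_opp:
  fixes V d :: "nat \<Rightarrow> int" and N H i j :: int
  assumes N: "N = 2*H" "H > 0" "even H"
  and d0: "d 0 = H"
  and dneg: "\<And>a. 0<a \<Longrightarrow> a<L \<Longrightarrow> -H < d a \<and> d a < 0"
  and ab: "a<L" "b<L"
  and e1: "(V a + i) mod N = (V b + d b + j) mod N"
  and e2: "(V a + d a + i) mod N = (V b + j) mod N"
  and par: "odd (i - j)"
  shows False
proof -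
  have x1: "N dvd (V a + i - (V b + d b + j))" using e1 by (simp add: mod_eq_dvd_iff)
  have x2: "N dvd (V a + d a + i - (V b + j))" using e2 by (simp add: mod_eq_dvd_iff)
  have "N dvd ((V a + d a + i - (V b + j)) - (V a + i - (V b + d b + j)))"
    using x1 x2 dvd_diff by blast
  then have "N dvd (d a + d b)" by (simp add: algebra_simps)
  then have "N dvd (d a + d b - N)" by (simp add: dvd_diff)
  moreover have "\<bar>d a + d b - N\<bar> < N"
  proof -
    have "d a + d b \<noteq> 0"
      using dneg[of a] dneg[of b] ab d0 N by (cases "a = 0"; cases "b = 0") auto
    moreover have "\<bar>d a + d b\<bar> < N \<or> d a + d b = N"
      using dneg[of a] dneg[of b] ab d0 N by (cases "a = 0"; cases "b = 0") auto
    ultimately show ?thesis using \<open>N dvd (d a + d b)\<close> dvd_small[of N "d a + d b"] N by auto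
  qed
  ultimately have "d a + d b = N" using dvd_small[of N "d a + d b - N"] by simp
  then have ab0: "a = 0 \<and> b = 0"
    using dneg[of a] dneg[of b] ab d0 N by (cases "a = 0"; cases "b = 0") auto
  then have "a = 0" "b = 0" by auto
  then have "N dvd (i - j - H)" using x1 d0 by (simp add: algebra_simps)
  moreover have "2 dvd N" using N by simp
  ultimately have "even (i - j - H)" using dvd_trans by blast
  then show False using N par by simp
qed



lemma face_darts_map:
  assumes "length P = L" "L > 0"
  shows "face_darts (map f P) = {(f (P ! a), f (P ! ((a+1) mod L))) | a. a < L}"
proof -
  have e: "(map f P ! j, map f P ! ((j+1) mod L)) = (f (P!j), f (P!((j+1) mod L)))" if "j < L" for j
    using assms that by simp
  show ?thesis unfolding face_darts_def length_map assms(1)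
  proof (intro Collect_cong iffI)
    fix x assume "\<exists>j. x = (map f P ! j, map f P ! ((j+1) mod L)) \<and> j < L"
    then show "\<exists>a. x = (f (P ! a), f (P ! ((a+1) mod L))) \<and> a < L" using e by metis
  next
    fix x assume "\<exists>a. x = (f (P ! a), f (P ! ((a+1) mod L))) \<and> a < L"
    then show "\<exists>j. x = (map f P ! j, map f P ! ((j+1) mod L)) \<and> j < L" using e by metis
  qed
qed

lemma Dmap_nth: "i < n \<Longrightarrow> D_map k r n ! i = map (\<lambda>v. (v + int i) mod int n) (D_polygon k r)"
  by (simp add: D_map_def)

lemma Dmap_len: "length (D_map k r n) = n"
  by (simp add: D_map_def)

theorem mainTheorem16:
  fixes k r n :: nat
  assumes "k \<ge> 2" and "n = 2 * 3 ^ k - 2 + 4 * r"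
  shows "(even r \<longrightarrow> orientable_map (D_map k r n)) \<and>
         (odd r \<longrightarrow> \<not> orientable_map (D_map k r n))"
proof -
  note k = assms(1)
  define P where "P = D_polygon k r"
  define L where "L = 2*k+1"
  define H :: int where "H = 3^k - 1 + 2 * int r"
  define N :: int where "N = int n"
  define V where "V a = P ! a" for a
  define d where "d a = V ((a+1) mod L) - V a" for a
  have NH: "N = 2*H"
  proof -
    have "(2::nat) \<le> 2 * 3^k" by simp
    then have "n + 2 = 2*3^k + 4*r" using assms(2) by arith
    then have "int n + 2 = 2*3^k + 4 * int r" by (metis of_nat_add of_nat_mult of_nat_numeral of_nat_power)
    then show ?thesis by (simp add: N_def H_def)
  qed
  have H3: "(3::int)^k = 3 * 3^(k-1)" using k by (cases k) auto
  have Hpos: "H > 0"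
  proof -
    have "(1::int) \<le> 3^(k-1)" by simp
    moreover have "(0::int) \<le> int r" by simp
    ultimately show ?thesis unfolding H_def using H3 by linarith
  qed
  have Hev: "even H" by (simp add: H_def)
  have lenP: "length P = L" using k by (simp add: P_def L_def Dp_len)
  have Lpos: "L > 0" by (simp add: L_def)
  have Vd: "V ((a+1) mod L) = V a + d a" for a by (simp add: d_def)
  have d0: "d 0 = H" using Dp_d0[OF k, of r] k by (simp add: d_def V_def P_def L_def H_def)
  have dstep: "d a = - D_step k r (a+1)" if "0 < a" "a < L" for a
    using Dp_d[OF k, of a r] that by (simp add: d_def V_def P_def L_def)
  have dneg: "-H < d a \<and> d a < 0" if "0 < a" "a < L" for a
    using dstep[OF that] Dstep_pos[of k r "a+1"] Dstep_lt[OF k, of "a+1" r] that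
    by (simp add: H_def)
  define dart where "dart i a = ((V a + int i) mod N, (V a + d a + int i) mod N)" for i a
  have faces: "face_darts (D_map k r n ! i) = dart i ` {..<L}" if "i < n" for i
  proof -
    have "face_darts (D_map k r n ! i) =
      {((V a + int i) mod N, (V a + d a + int i) mod N) | a. a < L}"
      using Dmap_nth[OF that] face_darts_map[OF lenP Lpos] Vd
      by (simp add: V_def N_def P_def)
    also have "\<dots> = dart i ` {..<L}" unfolding dart_def by blast
    finally show ?thesis .
  qed
  have odmem: "\<exists>a<L. (if s then x = dart i a else x = prod.swap (dart i a))"
    if "x \<in> oriented_darts s (D_map k r n ! i)" "i < n" for s x i
  proof (cases s)
    case True then show ?thesis using that(1) unfolding oriented_darts_def faces[OF that(2)] by auto
  next
    case False
    have sw: "(\<lambda>(a, b). (b, a)) = prod.swap" by (auto simp: prod.swap_def)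
    show ?thesis using False that(1) unfolding oriented_darts_def faces[OF that(2)] sw by auto
  qed
  have conflict: "\<sigma> i \<noteq> \<sigma> j"
    if orient: "\<forall>i j. i < n \<longrightarrow> j < n \<longrightarrow> i \<noteq> j \<longrightarrow>
       oriented_darts (\<sigma> i) (D_map k r n ! i) \<inter> oriented_darts (\<sigma> j) (D_map k r n ! j) = {}"
    and ij: "i < n" "j < n" "i \<noteq> j" "x \<in> face_darts (D_map k r n ! i)" "x \<in> face_darts (D_map k r n ! j)"
    for \<sigma> i j x
  proof
    assume e: "\<sigma> i = \<sigma> j"
    have "oriented_darts (\<sigma> i) (D_map k r n ! i) \<inter> oriented_darts (\<sigma> j) (D_map k r n ! j) = {}"
      using orient ij by blast
    moreover have "x \<in> oriented_darts (\<sigma> i) (D_map k r n ! i) \<inter> oriented_darts (\<sigma> j) (D_map k r n ! j) \<or>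
        (\<lambda>(a, b). (b, a)) x \<in> oriented_darts (\<sigma> i) (D_map k r n ! i) \<inter> oriented_darts (\<sigma> j) (D_map k r n ! j)"
      using ij(4,5) e unfolding oriented_darts_def by (cases "\<sigma> j") auto
    ultimately show False by blast
  qed
  have part1: "orientable_map (D_map k r n)" if ev: "even r"
  proof -
    have pair: "odd (V a - V b)" if "0<a" "0<b" "a<L" "b<L" "a\<noteq>b" "d a = d b" for a b
    proof -
      have "D_step k r (a+1) = D_step k r (b+1)" using dstep[of a] dstep[of b] that by simp
      then have "(a+1) div 2 = (b+1) div 2" using Dstep_inj[OF k, of "a+1" "b+1" r] that
        by (simp add: L_def)
      then have "b = a + 1 \<or> a = b + 1" using that(5) by presburger
      then show ?thesis
      proof
        assume b: "b = a + 1"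
        then have "V b = V a + d a" using Vd[of a] that by simp
        then show ?thesis using dstep[of a] that Dstep_odd[OF ev] by simp
      next
        assume a: "a = b + 1"
        then have "V a = V b + d b" using Vd[of b] that by simp
        then show ?thesis using dstep[of b] that Dstep_odd[OF ev] by simp
      qed
    qed
    show ?thesis unfolding orientable_map_def
    proof (intro exI[of _ "\<lambda>i. even i"] allI impI)
      fix i j assume ij: "i < length (D_map k r n)" "j < length (D_map k r n)" "i \<noteq> j"
      then have ij': "i < n" "j < n" by (auto simp: Dmap_len)
      have bnd: "0 \<le> int i" "int i < N" "0 \<le> int j" "int j < N" using ij' by (auto simp: N_def)
      show "oriented_darts (even i) (D_map k r n ! i) \<inter> oriented_darts (even j) (D_map k r n ! j) = {}"
      proof (rule ccontr)
        assume "oriented_darts (even i) (D_map k r n ! i) \<inter> oriented_darts (even j) (D_map k r n ! j) \<noteq> {}"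
        then obtain x where x: "x \<in> oriented_darts (even i) (D_map k r n ! i)"
          "x \<in> oriented_darts (even j) (D_map k r n ! j)" by blast
        obtain a where a: "a < L" "if even i then x = dart i a else x = prod.swap (dart i a)"
          using odmem[OF x(1) ij'(1)] by blast
        obtain b where b: "b < L" "if even j then x = dart j b else x = prod.swap (dart j b)"
          using odmem[OF x(2) ij'(2)] by blast
        have swinj: "p = q" if "prod.swap p = prod.swap q" for p q :: "int \<times> int"
          using that by (metis swap_swap)
        consider "even i = even j" | "even i" "odd j" | "odd i" "even j" by blast
        then show False
        proof cases
          case 1
          have par: "even (int i - int j)" using 1 by simp
          have "dart i a = dart j b" using a(2) b(2) 1 swinj by (cases "even i") auto
          then have e1: "(V a + int i) mod N = (V b + int j) mod N"
            and e2: "(V a + d a + int i) mod N = (V b + d b + int j) mod N"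
            by (simp_all add: dart_def)
          have "int i = int j"
            using core_same[where N=N and H=H and d=d and L=L and V=V and a=a and b=b and i="int i" and j="int j",
              OF NH Hpos d0 dneg pair a(1) b(1) e1 e2 par bnd] .
          then show False using ij by simp
        next
          case 2
          have par: "odd (int i - int j)" using 2 by simp
          have "dart i a = prod.swap (dart j b)" using a(2) b(2) 2 by simp
          then have e1: "(V a + int i) mod N = (V b + d b + int j) mod N"
            and e2: "(V a + d a + int i) mod N = (V b + int j) mod N"
            by (simp_all add: dart_def)
          show False
            using core_opp[where N=N and H=H and d=d and L=L and V=V and a=a and b=b and i="int i" and j="int j",
              OF NH Hpos Hev d0 dneg a(1) b(1) e1 e2 par] .
        next
          case 3
          have par: "odd (int j - int i)" using 3 by simp
          have "prod.swap (dart i a) = dart j b" using a(2) b(2) 3 by simp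
          then have e1: "(V b + int j) mod N = (V a + d a + int i) mod N"
            and e2: "(V b + d b + int j) mod N = (V a + int i) mod N"
            by (simp_all add: dart_def)
          show False
            using core_opp[where N=N and H=H and d=d and L=L and V=V and a=b and b=a and i="int j" and j="int i",
              OF NH Hpos Hev d0 dneg b(1) a(1) e1 e2 par] .
        qed
      qed
    qed
  qed
  have part2: "\<not> orientable_map (D_map k r n)" if od: "odd r"
  proof
    assume "orientable_map (D_map k r n)"
    then obtain \<sigma> :: "nat \<Rightarrow> bool" where orient: "\<forall>i j. i < n \<longrightarrow> j < n \<longrightarrow> i \<noteq> j \<longrightarrow>
       oriented_darts (\<sigma> i) (D_map k r n ! i) \<inter> oriented_darts (\<sigma> j) (D_map k r n ! j) = {}"
      unfolding orientable_map_def Dmap_len by blast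
    have L1: "2*k-1 < L" "2*k < L" "1 < L" "2 < L" "0 < 2*k-1" using k by (auto simp: L_def)
    have step: "\<sigma> i \<noteq> \<sigma> (i+1)" if "i + 1 < n" for i
    proof -
      have d1: "d (2*k-1) = -1" "d (2*k) = -1"
        using dstep[of "2*k-1"] dstep[of "2*k"] L1 k by (auto simp: D_step_def)
      have v: "V (2*k) = V (2*k-1) + d (2*k-1)" using Vd[of "2*k-1"] L1 k by (simp add: L_def)
      let ?x = "dart i (2*k-1)"
      have m1: "?x \<in> face_darts (D_map k r n ! i)" using faces[of i] that L1 by auto
      have c1: "V (2*k) + int (i+1) = V (2*k-1) + int i" using v d1 by simp
      have c2: "V (2*k) + d (2*k) + int (i+1) = V (2*k-1) + d (2*k-1) + int i" using v d1 by simp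
      have "?x = dart (i+1) (2*k)" unfolding dart_def c1 c2 ..
      then have m2: "?x \<in> face_darts (D_map k r n ! (i+1))" using faces[of "i+1"] that L1 by auto
      show ?thesis using conflict[OF orient, of i "i+1" ?x] that m1 m2 by auto
    qed
    have alt: "\<sigma> i = (\<sigma> 0 = even i)" if "i < n" for i
      using that
    proof (induction i)
      case 0 then show ?case by simp
    next
      case (Suc i)
      then show ?case using step[of i] by auto
    qed
    define s where "s = 3^(k-1) + r"
    have sds: "int s = D_step k r 2" "int s = D_step k r 3" by (simp_all add: s_def D_step_def)
    have sev: "even s" using od by (simp add: s_def)
    have sn: "s < n"
    proof -
      have "int s < H" using sds Dstep_lt[OF k, of 2 r] by (simp add: H_def)
      then show ?thesis using NH Hpos by (simp add: N_def)
    qed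
    have spos: "s \<noteq> 0" by (simp add: s_def)
    have "d 1 = - D_step k r 2" using dstep[of 1] L1 by (simp add: numeral_2_eq_2)
    moreover have "d 2 = - D_step k r 3" using dstep[of 2] L1 by simp
    ultimately have d12: "d 1 = - int s" "d 2 = - int s" using sds by simp_all
    have v2: "V 2 = V 1 + d 1" using Vd[of 1] L1 by (simp add: L_def numeral_2_eq_2)
    let ?x = "dart 0 1"
    have "?x \<in> face_darts (D_map k r n ! 0)" using faces[of 0] sn L1 by auto
    moreover have "?x = dart s 2" using v2 d12 unfolding dart_def by simp
    then have "?x \<in> face_darts (D_map k r n ! s)" using faces[of s] sn L1 by auto
    ultimately have "\<sigma> 0 \<noteq> \<sigma> s" using conflict[OF orient, of 0 s ?x] sn spos by auto
    then show False using alt[OF sn] sev by simp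
  qed
  show ?thesis using part1 part2 by blast
qed

end
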